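(* Let $(\mathbf{X}^0,\mathbf{p})$ be a pEF1 $\{1,k\}$-payment equilibrium that is not $(2-1/k)$-pEFX. Then there exists an integer $z<k$ such that $p(X^0_j)\in\{z,z+1\}$ for every agent $j\in N_L$, and $p(X^0_i)\in[k,k+z]$ for every agent $i\in N_H$.
   Context: Fix $k>1$. Agents $N$, chores $M$, additive costs $c_i(e)\in\{1,k\}$. An allocation partitions $M$ into bundles. A payment vector assigns $p(e)>0$, $p(X)=\sum_{e\in X}p(e)$; $\alpha_{i,e}=c_i(e)/p(e)$, $\alpha_i=\min_e\alpha_{i,e}$, $\mathsf{MPB}_i=\{e:\alpha_{i,e}=\alpha_i\}$; $(\mathbf{X},\mathbf{p})$ is a $\{1,k\}$-payment equilibrium if $X_i\subseteq\mathsf{MPB}_i$ for all $i$ and $p(e)\in\{1,k\}$ for all $e$. It is pEF1 if for all $i,j$, $X_i=\emptyset$ or some $e\in X_i$ has $p(X_i\setminus\{e\})\le p(X_j)$; it is $\beta$-pEFX if for all $i,j$, $X_i=\emptyset$ or $p(X_i\setminus\{e\})\le\beta\,p(X_j)$ for all $e\in X_i$. $L=\{e:p(e)=1\}$, $H=\{e:p(e)=k\}$, $N_L=\{i:X^0_i\subseteq L\}$, $N_H=\{i:|X^0_i\cap H|\ge1\}$. *)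

theory Defs
  imports Complex_Main
begin

definition is_allocation :: "'a set \<Rightarrow> 'b set \<Rightarrow> ('a \<Rightarrow> 'b set) \<Rightarrow> bool" where
  "is_allocation N M X \<longleftrightarrow>
     (\<Union>i\<in>N. X i) = M \<and> (\<forall>i\<in>N. \<forall>j\<in>N. i \<noteq> j \<longrightarrow> X i \<inter> X j = {})"

definition pay :: "('b \<Rightarrow> real) \<Rightarrow> 'b set \<Rightarrow> real" where
  "pay p S = (\<Sum>e\<in>S. p e)"

definition alpha :: "'b set \<Rightarrow> ('a \<Rightarrow> 'b \<Rightarrow> real) \<Rightarrow> ('b \<Rightarrow> real) \<Rightarrow> 'a \<Rightarrow> real" where
  "alpha M c p i = Min ((\<lambda>e. c i e / p e) ` M)"

definition MPB :: "'b set \<Rightarrow> ('a \<Rightarrow> 'b \<Rightarrow> real) \<Rightarrow> ('b \<Rightarrow> real) \<Rightarrow> 'a \<Rightarrow> 'b set" where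
  "MPB M c p i = {e \<in> M. c i e / p e = alpha M c p i}"

definition one_k_payment_equilibrium ::
  "real \<Rightarrow> 'a set \<Rightarrow> 'b set \<Rightarrow> ('a \<Rightarrow> 'b \<Rightarrow> real) \<Rightarrow> ('a \<Rightarrow> 'b set) \<Rightarrow> ('b \<Rightarrow> real) \<Rightarrow> bool" where
  "one_k_payment_equilibrium k N M c X p \<longleftrightarrow>
     is_allocation N M X \<and> (\<forall>e\<in>M. p e > 0) \<and>
     (\<forall>i\<in>N. X i \<subseteq> MPB M c p i) \<and> (\<forall>e\<in>M. p e \<in> {1, k})"

definition pEF1 :: "'a set \<Rightarrow> ('a \<Rightarrow> 'b set) \<Rightarrow> ('b \<Rightarrow> real) \<Rightarrow> bool" where
  "pEF1 N X p \<longleftrightarrow> (\<forall>i\<in>N. \<forall>j\<in>N. X i = {} \<or>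
      (\<exists>e\<in>X i. pay p (X i - {e}) \<le> pay p (X j)))"

definition pEFX :: "real \<Rightarrow> 'a set \<Rightarrow> ('a \<Rightarrow> 'b set) \<Rightarrow> ('b \<Rightarrow> real) \<Rightarrow> bool" where
  "pEFX \<beta> N X p \<longleftrightarrow> (\<forall>i\<in>N. \<forall>j\<in>N. X i = {} \<or>
      (\<forall>e\<in>X i. pay p (X i - {e}) \<le> \<beta> * pay p (X j)))"

definition low_chores :: "'b set \<Rightarrow> ('b \<Rightarrow> real) \<Rightarrow> 'b set" where
  "low_chores M p = {e \<in> M. p e = 1}"

definition high_chores :: "real \<Rightarrow> 'b set \<Rightarrow> ('b \<Rightarrow> real) \<Rightarrow> 'b set" where
  "high_chores k M p = {e \<in> M. p e = k}"

definition N_L :: "'a set \<Rightarrow> 'b set \<Rightarrow> ('a \<Rightarrow> 'b set) \<Rightarrow> ('b \<Rightarrow> real) \<Rightarrow> 'a set" where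
  "N_L N M X p = {i \<in> N. X i \<subseteq> low_chores M p}"

definition N_H :: "real \<Rightarrow> 'a set \<Rightarrow> 'b set \<Rightarrow> ('a \<Rightarrow> 'b set) \<Rightarrow> ('b \<Rightarrow> real) \<Rightarrow> 'a set" where
  "N_H k N M X p = {i \<in> N. card (X i \<inter> high_chores k M p) \<ge> 1}"

end

theory Submission
  imports Defs
begin

theorem corollary2:
  fixes k :: real and N :: "'a set" and M :: "'b set"
    and c :: "'a \<Rightarrow> 'b \<Rightarrow> real" and X :: "'a \<Rightarrow> 'b set" and p :: "'b \<Rightarrow> real"
  assumes "k > 1"
    and "finite N" and "finite M"
    and "\<forall>i\<in>N. \<forall>e\<in>M. c i e \<in> {1, k}"
    and "one_k_payment_equilibrium k N M c X p"
    and "pEF1 N X p"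
    and "\<not> pEFX (2 - 1 / k) N X p"
  shows "\<exists>z::int. real_of_int z < k
           \<and> (\<forall>j\<in>N_L N M X p. pay p (X j) \<in> {real_of_int z, real_of_int z + 1})
           \<and> (\<forall>i\<in>N_H k N M X p. k \<le> pay p (X i) \<and> pay p (X i) \<le> k + real_of_int z)"
proof -
  have alloc: "is_allocation N M X" and pv: "\<forall>e\<in>M. p e \<in> {1, k}"
    using assms(5) unfolding one_k_payment_equilibrium_def by auto
  have sub: "X i \<subseteq> M" if "i \<in> N" for i
    using alloc that unfolding is_allocation_def by blast
  have fin: "finite (X i)" if "i \<in> N" for i
    using sub[OF that] assms(3) finite_subset by blast
  have pe: "p e = 1 \<or> p e = k" if "i \<in> N" "e \<in> X i" for i e
    using pv sub[OF that(1)] that(2) by auto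
  have pos: "p e \<ge> 1" if "i \<in> N" "e \<in> X i" for i e
    using pe[OF that] assms(1) by auto
  have pk: "p e \<le> k" if "i \<in> N" "e \<in> X i" for i e
    using pe[OF that] assms(1) by auto
  have rem: "pay p (X i - {e}) = pay p (X i) - p e" if "i \<in> N" "e \<in> X i" for i e
    unfolding pay_def using sum_diff1[OF fin[OF that(1)], of p e] that(2) by simp
  have mono: "pay p S \<le> pay p (X i)" if "i \<in> N" "S \<subseteq> X i" for i S
    unfolding pay_def
    apply (rule sum_mono2[OF fin[OF that(1)] that(2)])
    using pos[OF that(1)] by fastforce
  have ef1: "pay p (X i) - k \<le> pay p (X j)" if t: "i \<in> N" "j \<in> N" "X i \<noteq> {}" for i j
  proof -
    obtain e where "e \<in> X i" "pay p (X i - {e}) \<le> pay p (X j)"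
      using assms(6) t unfolding pEF1_def by blast
    thus ?thesis using rem[OF t(1)] pk[OF t(1)] by fastforce
  qed
  obtain i j e where ij: "i \<in> N" "j \<in> N" "e \<in> X i"
    and viol: "pay p (X i - {e}) > (2 - 1/k) * pay p (X j)"
    using assms(7) unfolding pEFX_def by force
  define m where "m = Min ((\<lambda>j. pay p (X j)) ` N)"
  have Nne: "N \<noteq> {}" using ij by auto
  have "m \<in> (\<lambda>j. pay p (X j)) ` N" unfolding m_def using assms(2) Nne by simp
  then obtain j0 where j0: "j0 \<in> N" "pay p (X j0) = m" by auto
  have mle: "m \<le> pay p (X j')" if "j' \<in> N" for j'
    unfolding m_def using assms(2) that by simp
  have m0: "m \<ge> 0" using mono[OF j0(1), of "{}"] j0 by (simp add: pay_def)
  have mk: "m < k"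
  proof (rule ccontr)
    assume "\<not> m < k"
    hence mk: "m \<ge> k" by simp
    obtain e' where e': "e' \<in> X i" "pay p (X i - {e'}) \<le> m"
      using assms(6) ij j0 unfolding pEF1_def by blast
    have "(2 - 1/k) * m = m + m * (1 - 1/k)" by (simp add: algebra_simps)
    moreover have "m * (1 - 1/k) \<ge> k * (1 - 1/k)"
      using mk assms(1) by (intro mult_right_mono) (auto simp: field_simps)
    moreover have "k * (1 - 1/k) = k - 1" using assms(1) by (simp add: field_simps)
    ultimately have A: "(2 - 1/k) * m \<ge> m + k - 1" by linarith
    have B: "(2 - 1/k) * pay p (X j) \<ge> (2 - 1/k) * m"
      using mle[OF ij(2)] assms(1) by (intro mult_left_mono) (auto simp: field_simps)
    have "pay p (X i) - p e > m + k - 1" using viol rem[OF ij(1,3)] A B by linarith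
    moreover have "pay p (X i) - p e' \<le> m" using e' rem[OF ij(1) e'(1)] by simp
    ultimately show False using pos[OF ij(1,3)] pk[OF ij(1) e'(1)] by linarith
  qed
  have j0L: "X j0 \<subseteq> low_chores M p"
  proof
    fix x assume x: "x \<in> X j0"
    have "p x \<le> m" using mono[OF j0(1), of "{x}"] x j0 by (simp add: pay_def)
    thus "x \<in> low_chores M p" using pe[OF j0(1) x] mk sub[OF j0(1)] x
      unfolding low_chores_def by auto
  qed
  have payL: "pay p (X j') = real (card (X j'))" if "j' \<in> N_L N M X p" for j'
  proof -
    have "\<forall>x\<in>X j'. p x = 1" using that unfolding N_L_def low_chores_def by auto
    thus ?thesis unfolding pay_def by simp
  qed
  have j0N: "j0 \<in> N_L N M X p" using j0L j0 unfolding N_L_def by auto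
  define z where "z = int (card (X j0))"
  have mz: "m = real_of_int z" using payL[OF j0N] j0 z_def by simp
  show ?thesis
  proof (intro exI[of _ z] conjI ballI)
    show "real_of_int z < k" using mk mz by simp
  next
    fix j' assume jL: "j' \<in> N_L N M X p"
    hence jN: "j' \<in> N" unfolding N_L_def by auto
    have lo: "real_of_int z \<le> real (card (X j'))" using mle[OF jN] payL[OF jL] mz by simp
    have hi: "real (card (X j')) \<le> real_of_int z + 1"
    proof (cases "X j' = {}")
      case True thus ?thesis using lo z_def by simp
    next
      case False
      obtain e where "e \<in> X j'" "pay p (X j' - {e}) \<le> pay p (X j0)"
        using assms(6) jN j0 False unfolding pEF1_def by blast
      moreover have "p e = 1" using jL \<open>e \<in> X j'\<close> unfolding N_L_def low_chores_def by auto
      ultimately have "pay p (X j') - 1 \<le> m" using rem[OF jN] j0 by simp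
      thus ?thesis using payL[OF jL] mz by simp
    qed
    define n where "n = int (card (X j'))"
    have rn: "real (card (X j')) = real_of_int n" unfolding n_def by simp
    have "real_of_int z \<le> real_of_int n" using lo rn by simp
    hence z1: "z \<le> n" by (simp only: of_int_le_iff)
    have "real_of_int n \<le> real_of_int (z + 1)" using hi rn by simp
    hence z2: "n \<le> z + 1" by (simp only: of_int_le_iff)
    have "n = z \<or> n = z + 1" using z1 z2 by linarith
    hence "real (card (X j')) = real_of_int z \<or> real (card (X j')) = real_of_int z + 1"
      using rn by auto
    thus "pay p (X j') \<in> {real_of_int z, real_of_int z + 1}" using payL[OF jL] by auto
  next
    fix i' assume iH: "i' \<in> N_H k N M X p"
    hence iN: "i' \<in> N" and "card (X i' \<inter> high_chores k M p) \<ge> 1" unfolding N_H_def by auto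
    then obtain h where h: "h \<in> X i'" "p h = k"
    proof -
      have "X i' \<inter> high_chores k M p \<noteq> {}"
        using \<open>card (X i' \<inter> high_chores k M p) \<ge> 1\<close> by (metis card.empty not_one_le_zero)
      then obtain h where "h \<in> X i' \<inter> high_chores k M p" by blast
      thus ?thesis using that unfolding high_chores_def by blast
    qed
    show "k \<le> pay p (X i')" using mono[OF iN, of "{h}"] h by (simp add: pay_def)
    have "X i' \<noteq> {}" using h by blast
    thus "pay p (X i') \<le> k + real_of_int z" using ef1[OF iN j0(1)] j0 mz by linarith
  qed
qed

end
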